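(* Let $\hat a=a_1+a_2\varepsilon$ and $\hat b=b_1+b_2\varepsilon$ be dual complex numbers ($a_1,a_2,b_1,b_2\in\mathbb C$), and let $\hat q=q_1+q_2 j+(q_3+q_4 j)\varepsilon$ ($q_1,\dots,q_4\in\mathbb C$) be a unit dual quaternion such that $\hat q^*\hat a\hat q=\hat b$. Then $\hat a=\hat b$ or $\hat a=\overline{\hat b}$, where $\overline{\hat b}=\overline{b_1}+\overline{b_2}\varepsilon$.
   Context: $\mathbb{Q}$ denotes the real quaternions with units $i,j,k$; complex numbers are identified with quaternions $a+bi$ (so $jz=\bar z j$). $\varepsilon$ satisfies $\varepsilon\ne0$, $\varepsilon^2=0$ and commutes with quaternions. A dual quaternion is $\tilde p_{st}+\tilde p_{\mathcal I}\varepsilon$ with quaternions $\tilde p_{st},\tilde p_{\mathcal I}$, conjugate $\hat p^*=\tilde p_{st}^*+\tilde p_{\mathcal I}^*\varepsilon$. A dual quaternion $\hat p$ is unit if $|\hat p|=1$, where $|\hat p|=|\tilde p_{st}|+\frac{\mathrm{sc}(\tilde p_{st}^*\tilde p_{\mathcal I})}{|\tilde p_{st}|}\varepsilon$ for $\tilde p_{st}\ne0$ (and $|\tilde p_{\mathcal I}|\varepsilon$ otherwise), $\mathrm{sc}(\tilde p)=\frac12(\tilde p+\tilde p^* )$; equivalently $\hat p^*\hat p=\hat p\hat p^*=1$. *)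

theory Defs
  imports Complex_Main
begin

datatype quat = Quat (q_re: real) (q_i: real) (q_j: real) (q_k: real)

definition qadd :: "quat \<Rightarrow> quat \<Rightarrow> quat" where
  "qadd p q = Quat (q_re p + q_re q) (q_i p + q_i q) (q_j p + q_j q) (q_k p + q_k q)"

definition qmul :: "quat \<Rightarrow> quat \<Rightarrow> quat" where
  "qmul p q = Quat
     (q_re p * q_re q - q_i p * q_i q - q_j p * q_j q - q_k p * q_k q)
     (q_re p * q_i q + q_i p * q_re q + q_j p * q_k q - q_k p * q_j q)
     (q_re p * q_j q - q_i p * q_k q + q_j p * q_re q + q_k p * q_i q)
     (q_re p * q_k q + q_i p * q_j q - q_j p * q_i q + q_k p * q_re q)"

definition qcnj :: "quat \<Rightarrow> quat" where
  "qcnj p = Quat (q_re p) (- q_i p) (- q_j p) (- q_k p)"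

definition qone :: quat where "qone = Quat 1 0 0 0"
definition qzero :: quat where "qzero = Quat 0 0 0 0"
definition qj :: quat where "qj = Quat 0 0 1 0"

definition cq :: "complex \<Rightarrow> quat" where
  "cq z = Quat (Re z) (Im z) 0 0"

text \<open>Dual quaternions p_st + p_I \<epsilon>, as pairs (p_st, p_I).\<close>
type_synonym dquat = "quat \<times> quat"

definition dmul :: "dquat \<Rightarrow> dquat \<Rightarrow> dquat" where
  "dmul p q = (qmul (fst p) (fst q), qadd (qmul (fst p) (snd q)) (qmul (snd p) (fst q)))"

definition dcnj :: "dquat \<Rightarrow> dquat" where
  "dcnj p = (qcnj (fst p), qcnj (snd p))"

definition dquat_one :: dquat where "dquat_one = (qone, qzero)"

definition dunit :: "dquat \<Rightarrow> bool" where
  "dunit p \<longleftrightarrow> dmul (dcnj p) p = dquat_one \<and> dmul p (dcnj p) = dquat_one"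

definition dcx :: "complex \<Rightarrow> complex \<Rightarrow> dquat" where
  "dcx a1 a2 = (cq a1, cq a2)"

end

theory Submission imports Defs begin
definition P :: "complex \<Rightarrow> complex \<Rightarrow> quat" where "P z w = Quat (Re z) (Im z) (Re w) (Im w)"
lemma P_eq: "P a b = P c d \<longleftrightarrow> a = c \<and> b = d" by (auto simp: P_def complex_eq_iff)
lemma P_base: "qadd (cq a) (qmul (cq b) qj) = P a b" "cq a = P a 0" "qone = P 1 0" "qzero = P 0 0"
  by (simp_all add: P_def qadd_def qmul_def cq_def qj_def qone_def qzero_def)
lemma dcx_P: "dcx a b = (P a 0, P b 0)" by (simp add: dcx_def P_base(2))
lemma P_mul: "qmul (P a b) (P c d) = P (a*c - b*cnj d) (a*d + b*cnj c)"
  by (simp add: P_def qmul_def algebra_simps)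
lemma P_add: "qadd (P a b) (P c d) = P (a+c) (b+d)" by (simp add: P_def qadd_def)
lemma P_cnj: "qcnj (P a b) = P (cnj a) (-b)" by (simp add: P_def qcnj_def)

theorem lemma3p4:
  fixes a1 a2 b1 b2 q1 q2 q3 q4 :: complex
  assumes "dunit (qadd (cq q1) (qmul (cq q2) qj), qadd (cq q3) (qmul (cq q4) qj))"
    and "dmul (dmul (dcnj (qadd (cq q1) (qmul (cq q2) qj), qadd (cq q3) (qmul (cq q4) qj)))
                    (dcx a1 a2))
              (qadd (cq q1) (qmul (cq q2) qj), qadd (cq q3) (qmul (cq q4) qj)) = dcx b1 b2"
  shows "dcx a1 a2 = dcx b1 b2 \<or> dcx a1 a2 = dcx (cnj b1) (cnj b2)"
proof -
  note S = dcx_P dunit_def dmul_def dcnj_def dquat_one_def P_base(3,4) P_mul P_add P_cnj P_eq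
  have U: "cnj q1 * q1 + q2 * cnj q2 = 1" "cnj q1 * q3 + q2 * cnj q4 + (cnj q3 * q1 + q4 * cnj q2) = 0"
     "cnj q1 * q4 - q2 * cnj q3 + (cnj q3 * q2 - q4 * cnj q1) = 0"
    using assms(1) unfolding P_base(1) by (simp_all add: S)
  have B: "cnj q1*a1*q1 + q2*cnj a1*cnj q2 = b1"
     "cnj q1*a1*q2 - q2*cnj a1*cnj q1 = 0"
     "cnj q1*a1*q3 + q2*cnj a1*cnj q4 + cnj q1*a2*q1 + cnj q3*a1*q1 + q2*cnj a2*cnj q2 + q4*cnj a1*cnj q2 = b2"
     "cnj q1*a1*q4 - q2*cnj a1*cnj q3 + cnj q1*a2*q2 + cnj q3*a1*q2 - q2*cnj a2*cnj q1 - q4*cnj a1*cnj q1 = 0"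
    using assms(2) unfolding P_base(1) by (simp_all add: S algebra_simps)
  have C1: "a1*(cnj q1*q3 + cnj q3*q1) + a2*(cnj q1*q1) = b2" if "q2 = 0"
    using B(3) that by (simp add: algebra_simps)
  have C2: "cnj a1*(q2*cnj q4 + q4*cnj q2) + cnj a2*(q2*cnj q2) = b2" if "q1 = 0"
    using B(3) that by (simp add: algebra_simps)
  show ?thesis
  proof (cases "q2 = 0")
    case True
    then have "a1 = b1" "a2 = b2" using B(1) U C1[OF True] by (simp_all add: algebra_simps)
    then show ?thesis by simp
  next
    case q2: False
    show ?thesis
    proof (cases "q1 = 0")
      case True
      have "b1 = cnj a1 * (q2*cnj q2)" using B(1) True by (simp add: algebra_simps)
      with U(1) True have "cnj a1 = b1" by simp
      moreover have "cnj a2 = b2" using U C2[OF True] True by (simp_all add: algebra_simps)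
      ultimately have "a1 = cnj b1 \<and> a2 = cnj b2" by auto
      then show ?thesis by simp
    next
      case False
      have "cnj q1*q2*(a1 - cnj a1) = 0" using B(2) by (simp add: algebra_simps)
      with False q2 have ra1: "cnj a1 = a1" by simp
      have "a1*(cnj q1 * q4 - q2 * cnj q3 + (cnj q3 * q2 - q4 * cnj q1)) + cnj q1*q2*(a2 - cnj a2) = 0"
        using B(4) ra1 by (simp add: algebra_simps)
      with U(3) False q2 have ra2: "cnj a2 = a2" by simp
      have "a1 = b1" using B(1) ra1 U(1)
        by (metis mult.commute mult.left_commute distrib_left mult.right_neutral)
      moreover have "a2 = b2"
      proof -
        have "b2 = a1*(cnj q1*q3 + q2*cnj q4 + (cnj q3*q1 + q4*cnj q2)) + a2*(cnj q1*q1 + q2*cnj q2)"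
          using B(3) ra1 ra2 by (simp add: algebra_simps)
        then show ?thesis using U by simp
      qed
      ultimately show ?thesis by simp
    qed
  qed
qed
end
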